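(* In the setting of the context, let $\sigma$ be a faithful permutation of $\{1,\dots,T\}$ and assume the maximum delay is bounded by $\tau$. Then for every $t\in\{1,\dots,T\}$: (a) $|\sigma(t)-t|\le\tau$; (b) $\{\sigma(1),\dots,\sigma(t)\}\setminus\mathcal S_{\sigma(t)}\subset\{\sigma(t)-\tau,\dots,\sigma(t)+\tau\}$.
   Context: Delayed (possibly multi-agent) feedback protocol over rounds $t=1,\dots,T$: at each round the active agent plays a point using the feedback of the timestamps in $\mathcal S_t\subset\{1,\dots,t-1\}$ (the set of timestamps of feedback available to the active agent at time $t$). A permutation $\sigma$ of $\{1,\dots,T\}$ is faithful if $s\in\mathcal S_t$ implies $\sigma^{-1}(s)<\sigma^{-1}(t)$. The maximum delay is bounded by $\tau$ if $\{1,\dots,t-\tau-1\}\subset\mathcal S_t$ for all $t$. *)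

theory Defs
  imports Main
begin

definition faithful :: "nat \<Rightarrow> (nat \<Rightarrow> nat set) \<Rightarrow> (nat \<Rightarrow> nat) \<Rightarrow> bool" where
  "faithful T S \<sigma> \<longleftrightarrow> bij_betw \<sigma> {1..T} {1..T} \<and>
     (\<forall>t\<in>{1..T}. \<forall>s\<in>S t. inv_into {1..T} \<sigma> s < inv_into {1..T} \<sigma> t)"

definition delay_bounded :: "nat \<Rightarrow> (nat \<Rightarrow> nat set) \<Rightarrow> nat \<Rightarrow> bool" where
  "delay_bounded T S \<tau> \<longleftrightarrow> (\<forall>t\<in>{1..T}. {1..t - \<tau> - 1} \<subseteq> S t)"

end

theory Submission
  imports Defs
begin

theorem proposition11:
  fixes T \<tau> :: nat and S :: "nat \<Rightarrow> nat set" and \<sigma> :: "nat \<Rightarrow> nat"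
  assumes S_sub: "\<forall>t\<in>{1..T}. S t \<subseteq> {1..<t}"
    and faith: "faithful T S \<sigma>"
    and delay: "delay_bounded T S \<tau>"
    and t: "t \<in> {1..T}"
  shows "\<bar>int (\<sigma> t) - int t\<bar> \<le> int \<tau>
    \<and> \<sigma> ` {1..t} - S (\<sigma> t) \<subseteq> {\<sigma> t - \<tau> .. \<sigma> t + \<tau>}"
proof -
  define \<pi> where "\<pi> = inv_into {1..T} \<sigma>"
  have bij: "bij_betw \<sigma> {1..T} {1..T}" using faith unfolding faithful_def by blast
  have fa: "\<And>a s. a \<in> {1..T} \<Longrightarrow> s \<in> S a \<Longrightarrow> \<pi> s < \<pi> a"
    using faith unfolding faithful_def \<pi>_def by blast
  have dl: "\<And>a s. a \<in> {1..T} \<Longrightarrow> 1 \<le> s \<Longrightarrow> s + \<tau> < a \<Longrightarrow> s \<in> S a"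
    using delay unfolding delay_bounded_def by fastforce
  have pl: "\<And>x. x \<in> {1..T} \<Longrightarrow> \<pi> (\<sigma> x) = x"
    unfolding \<pi>_def using bij bij_betw_inv_into_left by fastforce
  have pr: "\<And>x. x \<in> {1..T} \<Longrightarrow> \<sigma> (\<pi> x) = x"
    unfolding \<pi>_def using bij bij_betw_inv_into_right by fastforce
  have pin: "\<pi> x \<in> {1..T}" if "x \<in> {1..T}" for x
  proof -
    have "x \<in> \<sigma> ` {1..T}" using bij that by (simp add: bij_betw_def)
    then show ?thesis unfolding \<pi>_def by (rule inv_into_into)
  qed
  have sin: "\<sigma> x \<in> {1..T}" if "x \<in> {1..T}" for x
    using bij that by (rule bij_betw_apply)
  define u where "u = \<sigma> t"
  have u: "u \<in> {1..T}" using sin t u_def by blast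
  have pu: "\<pi> u = t" using pl t u_def by blast
  have a1: "\<not> (u > t + \<tau>)"
  proof
    assume h: "u > t + \<tau>"
    have "{1..u-\<tau>-1} \<subseteq> \<sigma> ` {1..<t}"
    proof
      fix s assume s: "s \<in> {1..u-\<tau>-1}"
      then have "s \<in> S u" using dl[OF u] by auto
      then have "\<pi> s < t" using fa[OF u] pu by auto
      moreover have "s \<in> {1..T}" using s u by auto
      ultimately show "s \<in> \<sigma> ` {1..<t}" using pr pin by (metis atLeastLessThan_iff atLeastAtMost_iff image_eqI)
    qed
    then have "card {1..u-\<tau>-1} \<le> card (\<sigma> ` {1..<t})" by (intro card_mono) auto
    also have "\<dots> \<le> card {1..<t}" by (rule card_image_le) simp
    finally show False using h t by auto
  qed
  have a2: "\<not> (t > u + \<tau>)"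
  proof
    assume h: "t > u + \<tau>"
    have "{u+\<tau>+1..T} \<subseteq> \<sigma> ` {t+1..T}"
    proof
      fix v assume v: "v \<in> {u+\<tau>+1..T}"
      then have vT: "v \<in> {1..T}" by auto
      have "u \<in> S v" using dl[OF vT] u v by auto
      then have "t < \<pi> v" using fa[OF vT] pu by auto
      then show "v \<in> \<sigma> ` {t+1..T}" using pr pin vT by (metis atLeastAtMost_iff image_eqI Suc_eq_plus1 Suc_leI)
    qed
    then have "card {u+\<tau>+1..T} \<le> card (\<sigma> ` {t+1..T})" by (intro card_mono) auto
    also have "\<dots> \<le> card {t+1..T}" by (rule card_image_le) simp
    finally show False using h t by simp
  qed
  have A: "\<bar>int (\<sigma> t) - int t\<bar> \<le> int \<tau>" using a1 a2 u_def by auto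
  have B: "\<sigma> ` {1..t} - S (\<sigma> t) \<subseteq> {\<sigma> t - \<tau> .. \<sigma> t + \<tau>}"
  proof
    fix x assume x: "x \<in> \<sigma> ` {1..t} - S (\<sigma> t)"
    then obtain s where s: "s \<in> {1..t}" "x = \<sigma> s" "x \<notin> S u" using u_def by auto
    have sT: "s \<in> {1..T}" using s t by auto
    have xT: "x \<in> {1..T}" using sin sT s by blast
    have "\<not> x + \<tau> < u" using dl[OF u] xT s by auto
    moreover have "\<not> u + \<tau> < x"
    proof
      assume "u + \<tau> < x"
      then have "u \<in> S x" using dl[OF xT] u by auto
      then have "t < \<pi> x" using fa[OF xT] pu by auto
      moreover have "\<pi> x = s" using pl sT s by blast
      ultimately show False using s by auto
    qed
    ultimately show "x \<in> {\<sigma> t - \<tau> .. \<sigma> t + \<tau>}" using u_def by auto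
  qed
  show ?thesis using A B by blast
qed

end
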